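(* Let $\hat V$ be the $(1+\chi)\times(1+\chi)$ upper-left block of an iMPO in regular form, and let $R_0:=\mathrm{Id}_{1+\chi}$, $\hat V_0:=\hat V$, and for $n\ge1$ let $\hat V_{n-1}=\hat Q_nR_n$ be a QR decomposition, $\hat V_n:=R_n\hat Q_n$, $L_n:=R_n\cdots R_1$ ($L_0:=\mathrm{Id}$). Then for every $n\ge0$, $$\mathrm{Id}_{1+\chi}\,(T_V)^n=L_n^\dagger L_n.$$
   Context: $\mathcal A$ is the algebra of operators on $\mathbb C^q$ with inner product $\langle\hat A,\hat B\rangle=\mathrm{Tr}[\hat A^\dagger\hat B]/\mathrm{Tr}[\hat 1]$ and orthonormal basis $\{\hat O_\alpha\}$, $\hat O_0=\hat 1$. For an operator-valued matrix $\hat V=\sum_\alpha\hat O_\alpha V_\alpha$ ($(V_\alpha)_{ab}=\langle\hat O_\alpha,\hat V_{ab}\rangle$), the transfer matrix acts on square complex matrices from the left by $XT_V=\sum_\alpha V_\alpha^\dagger XV_\alpha$. An iMPO in regular form of bond dimension $\chi$ is a $(\chi+2)\times(\chi+2)$ matrix with entries in $\mathcal A$ of block form $\begin{pmatrix}\hat 1&\hat{\mathbf c}&\hat d\\0&\hat{\mathsf A}&\hat{\mathbf b}\\0&0&\hat 1\end{pmatrix}$ whose upper-left block is $\hat V=\begin{pmatrix}\hat 1&\hat{\mathbf c}\\0&\hat{\mathsf A}\end{pmatrix}$. A QR decomposition $\hat V=\hat QR$ has $\hat Q$ operator-valued with orthonormal columns, $\sum_a\langle\hat Q_{ab},\hat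 Q_{ac}\rangle=\delta_{bc}$ (equivalently $\sum_\alpha Q_\alpha^\dagger Q_\alpha=\mathrm{Id}$), and $R$ a complex upper-triangular matrix. *)

theory Defs
  imports "Jordan_Normal_Form.Schur_Decomposition"
begin

text \<open>Operators on C^q are q x q complex matrices. An operator-valued matrix is a
  matrix whose entries are such operators (type complex mat mat).\<close>

type_synonym opmat = "complex mat mat"

definition mtrace :: "complex mat \<Rightarrow> complex" where
  "mtrace A = (\<Sum>i<dim_row A. A $$ (i,i))"

definition op_inner :: "nat \<Rightarrow> complex mat \<Rightarrow> complex mat \<Rightarrow> complex" where
  "op_inner q A B = mtrace (mat_adjoint A * B) / of_nat q"

definition op_onb :: "nat \<Rightarrow> (nat \<Rightarrow> complex mat) \<Rightarrow> bool" where
  "op_onb q Ob \<longleftrightarrow> (\<forall>\<alpha><q^2. Ob \<alpha> \<in> carrier_mat q q)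
     \<and> (\<forall>\<alpha><q^2. \<forall>\<beta><q^2. op_inner q (Ob \<alpha>) (Ob \<beta>) = (if \<alpha> = \<beta> then 1 else 0))
     \<and> Ob 0 = 1\<^sub>m q"

definition is_opmat :: "nat \<Rightarrow> nat \<Rightarrow> nat \<Rightarrow> opmat \<Rightarrow> bool" where
  "is_opmat q nr nc V \<longleftrightarrow> V \<in> carrier_mat nr nc
     \<and> (\<forall>a<nr. \<forall>b<nc. V $$ (a,b) \<in> carrier_mat q q)"

definition comp :: "nat \<Rightarrow> (nat \<Rightarrow> complex mat) \<Rightarrow> opmat \<Rightarrow> nat \<Rightarrow> complex mat" where
  "comp q Ob V \<alpha> = mat (dim_row V) (dim_col V) (\<lambda>(a,b). op_inner q (Ob \<alpha>) (V $$ (a,b)))"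

text \<open>Transfer matrix acting from the left: X T_V = sum_alpha V_alpha^dagger X V_alpha.\<close>
definition transfer :: "nat \<Rightarrow> (nat \<Rightarrow> complex mat) \<Rightarrow> opmat \<Rightarrow> complex mat \<Rightarrow> complex mat" where
  "transfer q Ob V X = mat (dim_col V) (dim_col V)
     (\<lambda>(i,j). \<Sum>\<alpha><q^2. (mat_adjoint (comp q Ob V \<alpha>) * X * comp q Ob V \<alpha>) $$ (i,j))"

definition opmat_times_mat :: "nat \<Rightarrow> opmat \<Rightarrow> complex mat \<Rightarrow> opmat" where
  "opmat_times_mat q Q R = mat (dim_row Q) (dim_col R)
     (\<lambda>(a,b). mat q q (\<lambda>(i,j). \<Sum>c<dim_col Q. (Q $$ (a,c)) $$ (i,j) * R $$ (c,b)))"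

definition mat_times_opmat :: "nat \<Rightarrow> complex mat \<Rightarrow> opmat \<Rightarrow> opmat" where
  "mat_times_opmat q R Q = mat (dim_row R) (dim_col Q)
     (\<lambda>(a,b). mat q q (\<lambda>(i,j). \<Sum>c<dim_col R. R $$ (a,c) * (Q $$ (c,b)) $$ (i,j)))"

definition orthonormal_cols :: "nat \<Rightarrow> opmat \<Rightarrow> bool" where
  "orthonormal_cols q Q \<longleftrightarrow> (\<forall>b<dim_col Q. \<forall>c<dim_col Q.
     (\<Sum>a<dim_row Q. op_inner q (Q $$ (a,b)) (Q $$ (a,c))) = (if b = c then 1 else 0))"

definition is_QR :: "nat \<Rightarrow> nat \<Rightarrow> opmat \<Rightarrow> opmat \<Rightarrow> complex mat \<Rightarrow> bool" where
  "is_QR q D V Q R \<longleftrightarrow> is_opmat q D D Q \<and> orthonormal_cols q Q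
     \<and> R \<in> carrier_mat D D \<and> upper_triangular R \<and> V = opmat_times_mat q Q R"

definition regular_upper_block :: "nat \<Rightarrow> nat \<Rightarrow> opmat \<Rightarrow> bool" where
  "regular_upper_block q \<chi> V \<longleftrightarrow> is_opmat q (1+\<chi>) (1+\<chi>) V
     \<and> V $$ (0,0) = 1\<^sub>m q \<and> (\<forall>a. 1 \<le> a \<and> a < 1+\<chi> \<longrightarrow> V $$ (a,0) = 0\<^sub>m q q)"

fun Lprod :: "nat \<Rightarrow> (nat \<Rightarrow> complex mat) \<Rightarrow> nat \<Rightarrow> complex mat" where
  "Lprod D R 0 = 1\<^sub>m D"
| "Lprod D R (Suc n) = R (Suc n) * Lprod D R n"

end

theory Submission
  imports Defs
begin


lemma adj_def: "mat_adjoint A = mat (dim_col A) (dim_row A) (\<lambda>(i,j). conjugate (A $$ (j,i)))"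
  by (auto intro!: eq_matI simp: mat_adjoint_def mat_of_rows_index)

lemma adj_carrier[simp]: "A \<in> carrier_mat n m \<Longrightarrow> mat_adjoint A \<in> carrier_mat m n"
  by (auto simp: adj_def)

lemma adj_mult: assumes "A \<in> carrier_mat n m" "B \<in> carrier_mat m k"
  shows "mat_adjoint (A*B) = mat_adjoint B * mat_adjoint (A::complex mat)"
  using assms by (auto intro!: eq_matI simp: adj_def scalar_prod_def cnj_sum mult.commute)

lemma adj_one[simp]: "mat_adjoint (1\<^sub>m n :: complex mat) = 1\<^sub>m n"
  by (auto intro!: eq_matI simp: adj_def)

lemma sum_pairs: fixes q :: nat shows "(\<Sum>k<q*q. f (k div q) (k mod q)) = (\<Sum>i<q. \<Sum>j<q. (f i j :: 'a::comm_monoid_add))"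
proof -
  have "(\<Sum>k<q*q. f (k div q) (k mod q)) = (\<Sum>m<q. \<Sum>k\<in>{m*q..<m*q+q}. f (k div q) (k mod q))"
    using sum.nat_group[of "\<lambda>k. f (k div q) (k mod q)" q q] by simp
  also have "\<dots> = (\<Sum>i<q. \<Sum>j<q. f i j)"
  proof (rule sum.cong[OF refl])
    fix m assume "m \<in> {..<q}"
    have "(\<Sum>k\<in>{m*q..<m*q+q}. f (k div q) (k mod q)) = (\<Sum>j<q. f ((m*q+j) div q) ((m*q+j) mod q))"
      by (rule sum.reindex_bij_witness[of _ "\<lambda>j. m*q+j" "\<lambda>k. k - m*q"]) auto
    also have "\<dots> = (\<Sum>j<q. f m j)"
      by (rule sum.cong) auto
    finally show "(\<Sum>k\<in>{m*q..<m*q+q}. f (k div q) (k mod q)) = (\<Sum>j<q. f m j)" .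
  qed
  finally show ?thesis .
qed

lemma inner_expand: assumes "A \<in> carrier_mat q q" "B \<in> carrier_mat q q"
  shows "op_inner q A B = (\<Sum>k<q*q. cnj (A $$ (k div q, k mod q)) * B $$ (k div q, k mod q)) / of_nat q"
proof -
  have "mtrace (mat_adjoint A * B) = (\<Sum>i<q. \<Sum>j<q. cnj (A $$ (j,i)) * B $$ (j,i))"
    using assms by (simp add: mtrace_def adj_def scalar_prod_def atLeast0LessThan)
  also have "\<dots> = (\<Sum>j<q. \<Sum>i<q. cnj (A $$ (j,i)) * B $$ (j,i))" by (rule sum.swap)
  also have "\<dots> = (\<Sum>k<q*q. cnj (A $$ (k div q, k mod q)) * B $$ (k div q, k mod q))"
    by (rule sum_pairs[symmetric])
  finally show ?thesis by (simp add: op_inner_def)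
qed

definition vf :: "nat \<Rightarrow> complex mat \<Rightarrow> nat \<Rightarrow> complex" where
  "vf q A k = A $$ (k div q, k mod q)"

lemma completeness: assumes q: "q \<ge> 1" and onb: "op_onb q Ob" and k: "k < q*q" and l: "l < q*q"
  shows "(\<Sum>\<alpha><q*q. cnj (vf q (Ob \<alpha>) l) * vf q (Ob \<alpha>) k) = (if l = k then of_nat q else 0)"
proof -
  define N where "N = q*q"
  define M where "M = mat N N (\<lambda>(\<alpha>,k). vf q (Ob \<alpha>) k)"
  define Mi where "Mi = mat N N (\<lambda>(k,\<alpha>). cnj (vf q (Ob \<alpha>) k) / of_nat q)"
  have qnz: "(of_nat q :: complex) \<noteq> 0" using q by simp
  have carr: "\<And>\<alpha>. \<alpha> < N \<Longrightarrow> Ob \<alpha> \<in> carrier_mat q q" using onb unfolding op_onb_def N_def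
    by (simp add: power2_eq_square)
  have orth: "\<And>\<alpha> \<beta>. \<alpha> < N \<Longrightarrow> \<beta> < N \<Longrightarrow> op_inner q (Ob \<beta>) (Ob \<alpha>) = (if \<beta> = \<alpha> then 1 else 0)"
    using onb unfolding op_onb_def N_def by (simp add: power2_eq_square)
  have MMi: "M * Mi = 1\<^sub>m N"
  proof (rule eq_matI)
    fix \<alpha> \<beta> assume a: "\<alpha> < dim_row (1\<^sub>m N)" and b: "\<beta> < dim_col (1\<^sub>m N :: complex mat)"
    have "(M * Mi) $$ (\<alpha>,\<beta>) = (\<Sum>k<N. vf q (Ob \<alpha>) k * (cnj (vf q (Ob \<beta>) k) / of_nat q))"
      using a b unfolding M_def Mi_def by (simp add: scalar_prod_def atLeast0LessThan)
    also have "\<dots> = (\<Sum>k<N. cnj (vf q (Ob \<beta>) k) * vf q (Ob \<alpha>) k) / of_nat q"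
      by (simp add: sum_divide_distrib mult.commute del: complex_cnj_cancel_iff)
    also have "\<dots> = op_inner q (Ob \<beta>) (Ob \<alpha>)"
      using inner_expand[OF carr carr, of \<beta> \<alpha>] a b by (simp add: vf_def N_def)
    also have "\<dots> = 1\<^sub>m N $$ (\<alpha>,\<beta>)" using orth a b by auto
    finally show "(M * Mi) $$ (\<alpha>,\<beta>) = 1\<^sub>m N $$ (\<alpha>,\<beta>)" .
  qed (auto simp: M_def Mi_def)
  have "Mi * M = 1\<^sub>m N"
    by (rule mat_mult_left_right_inverse[OF _ _ MMi]) (simp_all add: M_def Mi_def)
  hence "(Mi * M) $$ (l,k) = 1\<^sub>m N $$ (l,k)" by simp
  hence "(\<Sum>\<alpha><N. cnj (vf q (Ob \<alpha>) l) / of_nat q * vf q (Ob \<alpha>) k) = (if l = k then 1 else 0)"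
    using k l unfolding M_def Mi_def N_def by (simp add: scalar_prod_def atLeast0LessThan)
  hence "(\<Sum>\<alpha><N. cnj (vf q (Ob \<alpha>) l) * vf q (Ob \<alpha>) k) / of_nat q = (if l = k then 1 else 0)"
    by (simp add: sum_divide_distrib)
  thus ?thesis using qnz unfolding N_def by (cases "l = k") (simp_all add: divide_eq_eq)
qed

lemma swap3: "(\<Sum>\<alpha>\<in>A. \<Sum>k\<in>B. \<Sum>l\<in>C. F \<alpha> k l) = (\<Sum>k\<in>B. \<Sum>l\<in>C. \<Sum>\<alpha>\<in>A. (F \<alpha> k l :: 'a::comm_monoid_add))"
  by (subst sum.swap) (rule sum.cong[OF refl], rule sum.swap)

lemma parseval: assumes q: "q \<ge> 1" and onb: "op_onb q Ob" and A: "A \<in> carrier_mat q q" and B: "B \<in> carrier_mat q q"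
  shows "(\<Sum>\<alpha><q^2. cnj (op_inner q (Ob \<alpha>) A) * op_inner q (Ob \<alpha>) B) = op_inner q A B"
proof -
  define N where "N = q*q"
  define ob where "ob = (\<lambda>\<alpha> k. vf q (Ob \<alpha>) k)"
  define a where "a = vf q A"
  define b where "b = vf q B"
  have qnz: "(of_nat q :: complex) \<noteq> 0" using q by simp
  have carr: "\<And>\<alpha>. \<alpha> < N \<Longrightarrow> Ob \<alpha> \<in> carrier_mat q q" using onb unfolding op_onb_def N_def
    by (simp add: power2_eq_square)
  have e1: "\<And>\<alpha> C. \<alpha> < N \<Longrightarrow> C \<in> carrier_mat q q \<Longrightarrow> op_inner q (Ob \<alpha>) C = (\<Sum>k<N. cnj (ob \<alpha> k) * vf q C k) / of_nat q"
    using inner_expand carr unfolding ob_def vf_def N_def by blast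
  have "(\<Sum>\<alpha><q^2. cnj (op_inner q (Ob \<alpha>) A) * op_inner q (Ob \<alpha>) B)
      = (\<Sum>\<alpha><N. cnj ((\<Sum>k<N. cnj (ob \<alpha> k) * a k) / of_nat q) * ((\<Sum>l<N. cnj (ob \<alpha> l) * b l) / of_nat q))"
    unfolding N_def power2_eq_square[symmetric] a_def b_def
    by (rule sum.cong[OF refl]) (simp add: e1[unfolded N_def power2_eq_square[symmetric]] A B)
  also have "\<dots> = (\<Sum>\<alpha><N. (\<Sum>k<N. ob \<alpha> k * cnj (a k)) * (\<Sum>l<N. cnj (ob \<alpha> l) * b l)) / (of_nat q)^2"
    by (simp add: cnj_sum sum_divide_distrib[symmetric] power2_eq_square times_divide_times_eq)
  also have "\<dots> = (\<Sum>\<alpha><N. \<Sum>k<N. \<Sum>l<N. cnj (a k) * b l * (cnj (ob \<alpha> l) * ob \<alpha> k)) / (of_nat q)^2"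
    unfolding sum_product by (simp add: mult_ac)
  also have "\<dots> = (\<Sum>k<N. \<Sum>l<N. cnj (a k) * b l * (\<Sum>\<alpha><N. cnj (ob \<alpha> l) * ob \<alpha> k)) / (of_nat q)^2"
    by (subst swap3) (simp add: sum_distrib_left)
  also have "\<dots> = (\<Sum>k<N. \<Sum>l<N. cnj (a k) * b l * (if l = k then of_nat q else 0)) / (of_nat q)^2"
    unfolding ob_def N_def
    by (intro arg_cong[where f="\<lambda>x. x / _"] sum.cong refl) (simp add: completeness[OF q onb])
  also have "\<dots> = (\<Sum>k<N. cnj (a k) * b k * of_nat q) / (of_nat q)^2"
    by (simp add: if_distrib[of "\<lambda>x. _ * x"] cong: if_cong)
  also have "\<dots> = (\<Sum>k<N. cnj (a k) * b k) / of_nat q"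
    using qnz by (simp add: sum_distrib_right[symmetric] power2_eq_square)
  also have "\<dots> = op_inner q A B"
    using inner_expand[OF A B] unfolding a_def b_def vf_def N_def by simp
  finally show ?thesis .
qed



lemma divmod_bounds: "k < q*q \<Longrightarrow> k div q < q \<and> k mod (q::nat) < q"
  by (cases "q = 0") (auto simp: less_mult_imp_div_less)

lemma inner_lin: assumes C: "C \<in> carrier_mat q q" and F: "\<And>c. c < n \<Longrightarrow> F c \<in> carrier_mat q q"
  shows "op_inner q C (mat q q (\<lambda>(i,j). \<Sum>c<n. (F c) $$ (i,j) * r c)) = (\<Sum>c<n. op_inner q C (F c) * r c)"
proof -
  have "op_inner q C (mat q q (\<lambda>(i,j). \<Sum>c<n. (F c) $$ (i,j) * r c))
     = (\<Sum>k<q*q. cnj (C $$ (k div q, k mod q)) * (\<Sum>c<n. (F c) $$ (k div q, k mod q) * r c)) / of_nat q"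
    by (subst inner_expand[OF C]) (auto intro!: sum.cong arg_cong[where f="\<lambda>x. x / _"] dest: divmod_bounds)
  also have "\<dots> = (\<Sum>c<n. (\<Sum>k<q*q. cnj (C $$ (k div q, k mod q)) * (F c) $$ (k div q, k mod q)) / of_nat q * r c)"
    by (simp add: sum_distrib_left sum_divide_distrib sum_distrib_right mult_ac) (rule sum.swap)
  also have "\<dots> = (\<Sum>c<n. op_inner q C (F c) * r c)"
    by (rule sum.cong[OF refl]) (simp add: inner_expand[OF C F])
  finally show ?thesis .
qed

lemma comp_carrier[simp]: "comp q Ob W \<alpha> \<in> carrier_mat (dim_row W) (dim_col W)"
  by (simp add: comp_def)

lemma comp_QR: assumes Q: "is_opmat q D D Q" and R: "R \<in> carrier_mat D D" and O: "Ob \<alpha> \<in> carrier_mat q q"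
  shows "comp q Ob (opmat_times_mat q Q R) \<alpha> = comp q Ob Q \<alpha> * R"
proof (rule eq_matI)
  fix a b assume a: "a < dim_row (comp q Ob Q \<alpha> * R)" and b: "b < dim_col (comp q Ob Q \<alpha> * R)"
  have QQ: "Q \<in> carrier_mat D D" and Qe: "\<And>a c. a < D \<Longrightarrow> c < D \<Longrightarrow> Q $$ (a,c) \<in> carrier_mat q q"
    using Q unfolding is_opmat_def by auto
  have ab: "a < D" "b < D" using a b QQ R by (auto simp: comp_def)
  have "comp q Ob (opmat_times_mat q Q R) \<alpha> $$ (a,b)
     = op_inner q (Ob \<alpha>) (mat q q (\<lambda>(i,j). \<Sum>c<D. (Q $$ (a,c)) $$ (i,j) * R $$ (c,b)))"
    using ab QQ R by (simp add: comp_def opmat_times_mat_def)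
  also have "\<dots> = (\<Sum>c<D. op_inner q (Ob \<alpha>) (Q $$ (a,c)) * R $$ (c,b))"
    by (rule inner_lin[OF O]) (simp add: Qe ab)
  also have "\<dots> = (comp q Ob Q \<alpha> * R) $$ (a,b)"
    using ab QQ R by (simp add: comp_def scalar_prod_def atLeast0LessThan)
  finally show "comp q Ob (opmat_times_mat q Q R) \<alpha> $$ (a,b) = (comp q Ob Q \<alpha> * R) $$ (a,b)" .
qed (use Q R in \<open>auto simp: comp_def opmat_times_mat_def is_opmat_def\<close>)

lemma comp_RQ: assumes Q: "is_opmat q D D Q" and R: "R \<in> carrier_mat D D" and O: "Ob \<alpha> \<in> carrier_mat q q"
  shows "comp q Ob (mat_times_opmat q R Q) \<alpha> = R * comp q Ob Q \<alpha>"
proof (rule eq_matI)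
  fix a b assume a: "a < dim_row (R * comp q Ob Q \<alpha>)" and b: "b < dim_col (R * comp q Ob Q \<alpha>)"
  have QQ: "Q \<in> carrier_mat D D" and Qe: "\<And>a c. a < D \<Longrightarrow> c < D \<Longrightarrow> Q $$ (a,c) \<in> carrier_mat q q"
    using Q unfolding is_opmat_def by auto
  have ab: "a < D" "b < D" using a b QQ R by (auto simp: comp_def)
  have "comp q Ob (mat_times_opmat q R Q) \<alpha> $$ (a,b)
     = op_inner q (Ob \<alpha>) (mat q q (\<lambda>(i,j). \<Sum>c<D. (Q $$ (c,b)) $$ (i,j) * R $$ (a,c)))"
    using ab QQ R by (simp add: comp_def mat_times_opmat_def mult.commute)
  also have "\<dots> = (\<Sum>c<D. op_inner q (Ob \<alpha>) (Q $$ (c,b)) * R $$ (a,c))"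
    by (rule inner_lin[OF O]) (simp add: Qe ab)
  also have "\<dots> = (R * comp q Ob Q \<alpha>) $$ (a,b)"
    using ab QQ R by (simp add: comp_def scalar_prod_def atLeast0LessThan mult.commute)
  finally show "comp q Ob (mat_times_opmat q R Q) \<alpha> $$ (a,b) = (R * comp q Ob Q \<alpha>) $$ (a,b)" .
qed (use Q R in \<open>auto simp: comp_def mat_times_opmat_def is_opmat_def\<close>)



definition tr :: "nat \<Rightarrow> nat \<Rightarrow> (nat \<Rightarrow> complex mat) \<Rightarrow> complex mat" where
  "tr N D f = mat D D (\<lambda>(i,j). \<Sum>\<alpha><N. f \<alpha> $$ (i,j))"

lemma tr_carrier[simp]: "tr N D f \<in> carrier_mat D D" by (simp add: tr_def)

lemma transfer_tr: "transfer q Ob W X = tr (q^2) (dim_col W) (\<lambda>\<alpha>. mat_adjoint (comp q Ob W \<alpha>) * X * comp q Ob W \<alpha>)"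
  by (simp add: transfer_def tr_def)

lemma assoc_norm:
  assumes "A \<in> carrier_mat D D" "B \<in> carrier_mat D D" "C \<in> carrier_mat D D"
  shows "A * B * C = A * (B * (C::complex mat))"
  using assms by (rule assoc_mult_mat)

lemma sandwich:
  assumes R: "R \<in> carrier_mat D D" and C: "C \<in> carrier_mat D D" and X: "X \<in> carrier_mat D D"
  shows "mat_adjoint R * mat_adjoint C * X * (C * R) = mat_adjoint R * (mat_adjoint C * X * C) * (R::complex mat)"
proof -
  have aR: "mat_adjoint R \<in> carrier_mat D D" and aC: "mat_adjoint C \<in> carrier_mat D D" using R C by auto
  have m1: "mat_adjoint R * mat_adjoint C \<in> carrier_mat D D" using aR aC by auto
  have l: "mat_adjoint R * mat_adjoint C * X \<in> carrier_mat D D" using m1 X by auto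
  have "mat_adjoint R * mat_adjoint C * X * (C * R) = mat_adjoint R * mat_adjoint C * X * C * R"
    using assoc_mult_mat[OF l C R] by simp
  also have "mat_adjoint R * mat_adjoint C * X * C = (mat_adjoint R * mat_adjoint C) * (X * C)"
    using assoc_mult_mat[OF m1 X C] .
  also have "\<dots> = mat_adjoint R * (mat_adjoint C * (X * C))"
    using assoc_mult_mat[OF aR aC, of "X * C" D] X C by auto
  also have "mat_adjoint C * (X * C) = mat_adjoint C * X * C"
    using assoc_mult_mat[OF aC X C] by simp
  finally show ?thesis .
qed

lemma tr_left: assumes A: "A \<in> carrier_mat D D" and f: "\<And>\<alpha>. f \<alpha> \<in> carrier_mat D D"
  shows "tr N D (\<lambda>\<alpha>. A * f \<alpha>) = A * tr N D f"
proof (rule eq_matI)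
  fix i j assume i: "i < dim_row (A * tr N D f)" and j: "j < dim_col (A * tr N D f)"
  hence ij: "i < D" "j < D" using A by (auto simp: tr_def)
  have "tr N D (\<lambda>\<alpha>. A * f \<alpha>) $$ (i,j) = (\<Sum>\<alpha><N. \<Sum>k<D. A $$ (i,k) * f \<alpha> $$ (k,j))"
    using ij A f by (simp add: tr_def scalar_prod_def atLeast0LessThan carrier_matD[OF f])
  also have "\<dots> = (\<Sum>k<D. \<Sum>\<alpha><N. A $$ (i,k) * f \<alpha> $$ (k,j))" by (rule sum.swap)
  also have "\<dots> = (A * tr N D f) $$ (i,j)"
    using ij A f by (simp add: tr_def scalar_prod_def atLeast0LessThan sum_distrib_left)
  finally show "tr N D (\<lambda>\<alpha>. A * f \<alpha>) $$ (i,j) = (A * tr N D f) $$ (i,j)" .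
qed (use A in \<open>auto simp: tr_def\<close>)

lemma tr_right: assumes B: "B \<in> carrier_mat D D" and f: "\<And>\<alpha>. f \<alpha> \<in> carrier_mat D D"
  shows "tr N D (\<lambda>\<alpha>. f \<alpha> * B) = tr N D f * B"
proof (rule eq_matI)
  fix i j assume i: "i < dim_row (tr N D f * B)" and j: "j < dim_col (tr N D f * B)"
  hence ij: "i < D" "j < D" using B by (auto simp: tr_def)
  have "tr N D (\<lambda>\<alpha>. f \<alpha> * B) $$ (i,j) = (\<Sum>\<alpha><N. \<Sum>k<D. f \<alpha> $$ (i,k) * B $$ (k,j))"
    using ij B f by (simp add: tr_def scalar_prod_def atLeast0LessThan carrier_matD[OF f])
  also have "\<dots> = (\<Sum>k<D. \<Sum>\<alpha><N. f \<alpha> $$ (i,k) * B $$ (k,j))" by (rule sum.swap)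
  also have "\<dots> = (tr N D f * B) $$ (i,j)"
    using ij B f by (simp add: tr_def scalar_prod_def atLeast0LessThan sum_distrib_right)
  finally show "tr N D (\<lambda>\<alpha>. f \<alpha> * B) $$ (i,j) = (tr N D f * B) $$ (i,j)" .
qed (use B in \<open>auto simp: tr_def\<close>)

lemma tr_sand: assumes A: "A \<in> carrier_mat D D" and B: "B \<in> carrier_mat D D" and f: "\<And>\<alpha>. f \<alpha> \<in> carrier_mat D D"
  shows "tr N D (\<lambda>\<alpha>. A * f \<alpha> * B) = A * tr N D f * B"
proof -
  have "tr N D (\<lambda>\<alpha>. A * f \<alpha> * B) = tr N D (\<lambda>\<alpha>. A * f \<alpha>) * B"
    by (rule tr_right[OF B]) (use A f in auto)
  also have "tr N D (\<lambda>\<alpha>. A * f \<alpha>) = A * tr N D f" by (rule tr_left[OF A f])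
  finally show ?thesis .
qed

lemma tr_cong: "(\<And>\<alpha>. \<alpha> < N \<Longrightarrow> f \<alpha> = g \<alpha>) \<Longrightarrow> tr N D f = tr N D g"
  by (simp add: tr_def)

lemma obc: "op_onb q Ob \<Longrightarrow> \<alpha> < q^2 \<Longrightarrow> Ob \<alpha> \<in> carrier_mat q q"
  by (simp add: op_onb_def)

lemma transfer_QR: assumes onb: "op_onb q Ob" and Q: "is_opmat q D D Q" and R: "R \<in> carrier_mat D D"
  and X: "X \<in> carrier_mat D D"
  shows "transfer q Ob (opmat_times_mat q Q R) X = mat_adjoint R * transfer q Ob Q X * R"
proof -
  have QQ: "Q \<in> carrier_mat D D" using Q by (simp add: is_opmat_def)
  have dc: "dim_col (opmat_times_mat q Q R) = D" using R by (simp add: opmat_times_mat_def)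
  have cc: "\<And>\<alpha>. comp q Ob Q \<alpha> \<in> carrier_mat D D" using QQ comp_carrier[of q Ob Q] by simp
  have "transfer q Ob (opmat_times_mat q Q R) X
      = tr (q^2) D (\<lambda>\<alpha>. mat_adjoint R * (mat_adjoint (comp q Ob Q \<alpha>) * X * comp q Ob Q \<alpha>) * R)"
    unfolding transfer_tr dc
  proof (rule tr_cong)
    fix \<alpha> assume "\<alpha> < q^2"
    hence O: "Ob \<alpha> \<in> carrier_mat q q" using obc[OF onb] by auto
    show "mat_adjoint (comp q Ob (opmat_times_mat q Q R) \<alpha>) * X * comp q Ob (opmat_times_mat q Q R) \<alpha>
      = mat_adjoint R * (mat_adjoint (comp q Ob Q \<alpha>) * X * comp q Ob Q \<alpha>) * R"
      unfolding comp_QR[of q D Q R Ob \<alpha>, OF Q R O] using adj_mult[OF cc R] cc R X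
      by (simp add: sandwich[of R D _ X])
  qed
  also have "\<dots> = mat_adjoint R * transfer q Ob Q X * R"
    unfolding transfer_tr using QQ carrier_matD[OF QQ]
    by (simp only:) (intro tr_sand; auto intro!: mult_carrier_mat adj_carrier R X cc)
  finally show ?thesis .
qed



lemma assoc5:
  assumes A: "A \<in> carrier_mat D D" and B: "B \<in> carrier_mat D D" and X: "X \<in> carrier_mat D D"
    and E: "E \<in> carrier_mat D D" and C: "C \<in> carrier_mat D D"
  shows "A * B * X * (E * C) = A * (B * X * E) * (C::complex mat)"
proof -
  have m1: "A * B \<in> carrier_mat D D" using A B by auto
  have l: "A * B * X \<in> carrier_mat D D" using m1 X by auto
  have "A * B * X * (E * C) = A * B * X * E * C"
    using assoc_mult_mat[OF l E C] by simp
  also have "A * B * X * E = (A * B) * (X * E)"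
    using assoc_mult_mat[OF m1 X E] .
  also have "\<dots> = A * (B * (X * E))"
    using assoc_mult_mat[OF A B, of "X * E" D] X E by auto
  also have "B * (X * E) = B * X * E"
    using assoc_mult_mat[OF B X E] by simp
  finally show ?thesis .
qed

lemma transfer_RQ: assumes onb: "op_onb q Ob" and Q: "is_opmat q D D Q" and R: "R \<in> carrier_mat D D"
  and X: "X \<in> carrier_mat D D"
  shows "transfer q Ob (mat_times_opmat q R Q) X = transfer q Ob Q (mat_adjoint R * X * R)"
proof -
  have QQ: "Q \<in> carrier_mat D D" using Q by (simp add: is_opmat_def)
  have dc: "dim_col (mat_times_opmat q R Q) = D" using QQ by (simp add: mat_times_opmat_def)
  have cc: "\<And>\<alpha>. comp q Ob Q \<alpha> \<in> carrier_mat D D" using QQ comp_carrier[of q Ob Q] by simp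
  show ?thesis
    unfolding transfer_tr dc carrier_matD[OF QQ]
  proof (rule tr_cong)
    fix \<alpha> assume "\<alpha> < q^2"
    hence O: "Ob \<alpha> \<in> carrier_mat q q" using obc[OF onb] by auto
    show "mat_adjoint (comp q Ob (mat_times_opmat q R Q) \<alpha>) * X * comp q Ob (mat_times_opmat q R Q) \<alpha>
      = mat_adjoint (comp q Ob Q \<alpha>) * (mat_adjoint R * X * R) * comp q Ob Q \<alpha>"
      unfolding comp_RQ[of q D Q R Ob \<alpha>, OF Q R O] adj_mult[OF R cc]
      by (rule assoc5) (use cc R X in auto)
  qed
qed

lemma transfer_orth: assumes q: "q \<ge> 1" and onb: "op_onb q Ob" and Q: "is_opmat q D D Q"
  and orth: "orthonormal_cols q Q"
  shows "transfer q Ob Q (1\<^sub>m D) = 1\<^sub>m D"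
proof -
  have QQ: "Q \<in> carrier_mat D D" and Qe: "\<And>a c. a < D \<Longrightarrow> c < D \<Longrightarrow> Q $$ (a,c) \<in> carrier_mat q q"
    using Q unfolding is_opmat_def by auto
  have cc: "\<And>\<alpha>. comp q Ob Q \<alpha> \<in> carrier_mat D D" using QQ comp_carrier[of q Ob Q] by simp
  show ?thesis
  proof (rule eq_matI)
    fix i j assume i: "i < dim_row (1\<^sub>m D :: complex mat)" and j: "j < dim_col (1\<^sub>m D :: complex mat)"
    hence ij: "i < D" "j < D" by auto
    have "transfer q Ob Q (1\<^sub>m D) $$ (i,j) = (\<Sum>\<alpha><q^2. (mat_adjoint (comp q Ob Q \<alpha>) * comp q Ob Q \<alpha>) $$ (i,j))"
      unfolding transfer_tr carrier_matD[OF QQ] tr_def using ij cc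
      by (simp add: right_mult_one_mat[OF adj_carrier[OF cc]])
    also have "\<dots> = (\<Sum>\<alpha><q^2. \<Sum>a<D. cnj (op_inner q (Ob \<alpha>) (Q $$ (a,i))) * op_inner q (Ob \<alpha>) (Q $$ (a,j)))"
      using ij QQ by (intro sum.cong refl) (simp add: adj_def comp_def scalar_prod_def atLeast0LessThan)
    also have "\<dots> = (\<Sum>a<D. \<Sum>\<alpha><q^2. cnj (op_inner q (Ob \<alpha>) (Q $$ (a,i))) * op_inner q (Ob \<alpha>) (Q $$ (a,j)))"
      by (rule sum.swap)
    also have "\<dots> = (\<Sum>a<D. op_inner q (Q $$ (a,i)) (Q $$ (a,j)))"
      using ij by (intro sum.cong refl) (simp add: parseval[OF q onb] Qe)
    also have "\<dots> = 1\<^sub>m D $$ (i,j)"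
      using orth ij QQ unfolding orthonormal_cols_def by auto
    finally show "transfer q Ob Q (1\<^sub>m D) $$ (i,j) = 1\<^sub>m D $$ (i,j)" .
  qed (use QQ in \<open>auto simp: transfer_def\<close>)
qed



theorem lemma6:
  fixes q \<chi> :: nat and Ob :: "nat \<Rightarrow> complex mat" and V :: opmat
    and Vs Qs :: "nat \<Rightarrow> opmat" and Rs :: "nat \<Rightarrow> complex mat"
  assumes "q \<ge> 1"
    and "op_onb q Ob"
    and "regular_upper_block q \<chi> V"
    and "Vs 0 = V"
    and "\<And>n. n \<ge> 1 \<Longrightarrow> is_QR q (1+\<chi>) (Vs (n-1)) (Qs n) (Rs n)"
    and "\<And>n. n \<ge> 1 \<Longrightarrow> Vs n = mat_times_opmat q (Rs n) (Qs n)"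
  shows "\<forall>n. (transfer q Ob V ^^ n) (1\<^sub>m (1+\<chi>)) = mat_adjoint (Lprod (1+\<chi>) Rs n) * Lprod (1+\<chi>) Rs n"
proof -
  note q = assms(1) and onb = assms(2)
  define D where "D = 1+\<chi>"
  have VV: "V \<in> carrier_mat D D" using assms(3) unfolding regular_upper_block_def is_opmat_def D_def by auto
  have QR: "\<And>k. is_opmat q D D (Qs (Suc k)) \<and> orthonormal_cols q (Qs (Suc k)) \<and> Rs (Suc k) \<in> carrier_mat D D
      \<and> Vs k = opmat_times_mat q (Qs (Suc k)) (Rs (Suc k))"
    using assms(5)[of "Suc _"] unfolding is_QR_def D_def by auto
  have VS: "\<And>k. Vs (Suc k) = mat_times_opmat q (Rs (Suc k)) (Qs (Suc k))" using assms(6) by auto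
  have Lc: "\<And>k. Lprod D Rs k \<in> carrier_mat D D"
  proof -
    fix k show "Lprod D Rs k \<in> carrier_mat D D"
    proof (induction k)
      case (Suc k)
      have "Rs (Suc k) \<in> carrier_mat D D" using QR by blast
      thus ?case using Suc by (simp add: mult_carrier_mat)
    qed simp
  qed
  have tc: "\<And>W X. dim_col W = D \<Longrightarrow> transfer q Ob W X \<in> carrier_mat D D"
    by (simp add: transfer_def)
  have key: "\<And>X. X \<in> carrier_mat D D \<Longrightarrow>
      transfer q Ob V (mat_adjoint (Lprod D Rs k) * X * Lprod D Rs k)
      = mat_adjoint (Lprod D Rs k) * transfer q Ob (Vs k) X * Lprod D Rs k" for k
  proof (induction k)
    case 0
    have "transfer q Ob V X \<in> carrier_mat D D" using tc VV by auto
    thus ?case using 0 assms(4) by simp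
  next
    case (Suc k)
    define R where "R = Rs (Suc k)"
    define Q where "Q = Qs (Suc k)"
    define L where "L = Lprod D Rs k"
    have R: "R \<in> carrier_mat D D" and Q: "is_opmat q D D Q" and Vk: "Vs k = opmat_times_mat q Q R"
      using QR[of k] unfolding R_def Q_def by auto
    have L: "L \<in> carrier_mat D D" using Lc unfolding L_def .
    have X: "X \<in> carrier_mat D D" by fact
    have aR: "mat_adjoint R \<in> carrier_mat D D" and aL: "mat_adjoint L \<in> carrier_mat D D" using R L by auto
    have Y: "mat_adjoint R * X * R \<in> carrier_mat D D" using aR X R by (intro mult_carrier_mat)
    have e1: "mat_adjoint (R * L) * X * (R * L) = mat_adjoint L * (mat_adjoint R * X * R) * L"
      unfolding adj_mult[OF R L] by (rule assoc5[OF aL aR X R L])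
    have "transfer q Ob V (mat_adjoint (R * L) * X * (R * L))
        = mat_adjoint L * transfer q Ob (Vs k) (mat_adjoint R * X * R) * L"
      unfolding e1 unfolding L_def using Suc.IH[OF Y] .
    also have "transfer q Ob (Vs k) (mat_adjoint R * X * R) = mat_adjoint R * transfer q Ob Q (mat_adjoint R * X * R) * R"
      unfolding Vk by (rule transfer_QR[OF onb Q R Y])
    also have "transfer q Ob Q (mat_adjoint R * X * R) = transfer q Ob (Vs (Suc k)) X"
      unfolding VS R_def[symmetric] Q_def[symmetric] by (rule transfer_RQ[OF onb Q R X, symmetric])
    also have "mat_adjoint L * (mat_adjoint R * transfer q Ob (Vs (Suc k)) X * R) * L
        = mat_adjoint (R * L) * transfer q Ob (Vs (Suc k)) X * (R * L)"
    proof -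
      have dV: "dim_col (Vs (Suc k)) = D" unfolding VS using Q
        by (auto simp: mat_times_opmat_def is_opmat_def Q_def)
      have T: "transfer q Ob (Vs (Suc k)) X \<in> carrier_mat D D" using tc[OF dV] .
      show ?thesis unfolding adj_mult[OF R L] by (rule assoc5[OF aL aR T R L, symmetric])
    qed
    finally show ?case unfolding L_def R_def by simp
  qed
  show ?thesis unfolding D_def[symmetric]
  proof
    fix n show "(transfer q Ob V ^^ n) (1\<^sub>m D) = mat_adjoint (Lprod D Rs n) * Lprod D Rs n"
    proof (induction n)
      case 0 thus ?case by simp
    next
      case (Suc n)
      define R where "R = Rs (Suc n)"
      define Q where "Q = Qs (Suc n)"
      define L where "L = Lprod D Rs n"
      have R: "R \<in> carrier_mat D D" and Q: "is_opmat q D D Q" and orth: "orthonormal_cols q Q"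
        and Vk: "Vs n = opmat_times_mat q Q R"
        using QR[of n] unfolding R_def Q_def by auto
      have L: "L \<in> carrier_mat D D" using Lc unfolding L_def .
      have aR: "mat_adjoint R \<in> carrier_mat D D" and aL: "mat_adjoint L \<in> carrier_mat D D" using R L by auto
      have "(transfer q Ob V ^^ Suc n) (1\<^sub>m D) = transfer q Ob V (mat_adjoint L * 1\<^sub>m D * L)"
        using Suc.IH aL unfolding L_def by simp
      also have "\<dots> = mat_adjoint L * transfer q Ob (Vs n) (1\<^sub>m D) * L"
        unfolding L_def by (rule key) simp
      also have "transfer q Ob (Vs n) (1\<^sub>m D) = mat_adjoint R * R"
        unfolding Vk transfer_QR[OF onb Q R one_carrier_mat] transfer_orth[OF q onb Q orth]
        using aR by simp
      also have "mat_adjoint L * (mat_adjoint R * R) * L = mat_adjoint (R * L) * (R * L)"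
      proof -
        have RR: "mat_adjoint R * R \<in> carrier_mat D D" using aR R by (intro mult_carrier_mat)
        have RL: "R * L \<in> carrier_mat D D" using R L by (intro mult_carrier_mat)
        show ?thesis unfolding adj_mult[OF R L]
          using assoc_mult_mat[OF aL RR L] assoc_mult_mat[OF aR R L] assoc_mult_mat[OF aL aR RL] by simp
      qed
      finally show ?case unfolding L_def R_def by simp
    qed
  qed
qed


end
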